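(* Let $R$ be a valuation domain of cardinality $\aleph_1$ and $J/R$ a type with $J$ not countably generated. If $J/R$ is essentially countable, then (i) $\Gamma'(J/R)=0$ and (ii) $\Gamma(J/R)=1$.
   Context: A valuation domain is an integral domain whose ideals are linearly ordered; $Q$ is its quotient field, $R^*$ its group of units. For $x,y\in R$, $x\equiv y \pmod r$ means $x-y\in rR$. A type $J/R$ is given by an $R$-submodule $J$ of $Q$ with $R\subseteq J$; write $J=\bigcup_{\sigma<\omega_1} r_\sigma^{-1}R$ with nonzero $r_\sigma\in R$, $r_\tau\mid r_\sigma$ and $r_\sigma\nmid r_\tau$ for $\tau<\sigma$. The type is essentially uncountable if for every $\sigma$ there is $\tau>\sigma$ with $r_\sigma R/r_\tau R$ uncountable, and essentially countable otherwise. A cub is a closed unbounded subset of $\omega_1$. $D(\omega_1)$ is the Boolean algebra of subsets of $\omega_1$ modulo the relation $S_1\sim S_2$ iff $S_1\cap C=S_2\cap C$ for some cub $C$; $\tilde S$ is the class of $S$; $0$ is the class of sets disjoint from a cub and $1$ the class of sets containing a cub. $\Gamma(J/R)=\tilde S$ where $S$ is the set of limit ordinals $\delta<\omega_1$ such that $R/\bigcap_{\sigma<\delta} r_\sigma R$ is not complete in the metrizable linear topology having the submodules $r_\sigma R/\bigcap_{\sigma'<\delta}r_{\sigma'}R$ ($\sigma<\delta$) as a basis of neighbourhoods of $0$. For a limit $\delta<\omega_1$, ${\cal T}^\delta_{J/R}$ is the set of sequences $\langle u_\sigma:\sigma<\delta\rangle$ with $u_\sigma\in R^*$ and $u_\tau-u_\sigma\in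 r_\sigma R$ for all $\sigma<\tau<\delta$. An $\omega_1$-filtration of $R$ by subrings is an increasing chain $\{N_\alpha:\alpha<\omega_1\}$ of countable subrings with $R=\bigcup_\alpha N_\alpha$ and $N_\alpha=\bigcup_{\beta<\alpha}N_\beta$ for limit $\alpha$. Fixing such a filtration, $\Gamma'(J/R)=\tilde{E'}$ where $E'$ is the set of limit $\delta<\omega_1$ for which there exists $\langle u_\sigma:\sigma<\delta\rangle\in{\cal T}^\delta_{J/R}$ such that for every $f\in R^*$ there is $\sigma<\delta$ such that there is no $n\in N_\delta$ with $u_\sigma f\equiv n\pmod{r_\sigma}$. Both $\Gamma$ and $\Gamma'$ are independent of the choices of the $r_\sigma$ and of the filtration. *)

theory Defs
  imports Main "HOL-Library.Countable_Set" "HOL-Computational_Algebra.Fraction_Field"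
begin

section \<open>The ring R (the whole type 'a) and its quotient field Q = 'a fract\<close>

definition emb :: "'a::idom \<Rightarrow> 'a fract" where
  "emb a = Fract a 1"

definition is_ideal :: "'a::comm_ring_1 set \<Rightarrow> bool" where
  "is_ideal I \<longleftrightarrow> 0 \<in> I \<and> (\<forall>x\<in>I. \<forall>y\<in>I. x + y \<in> I) \<and> (\<forall>c. \<forall>x\<in>I. c * x \<in> I)"

definition valuation_domain :: "'a::idom itself \<Rightarrow> bool" where
  "valuation_domain _ \<longleftrightarrow>
     (\<forall>I J :: 'a set. is_ideal I \<longrightarrow> is_ideal J \<longrightarrow> I \<subseteq> J \<or> J \<subseteq> I)"

definition principal :: "'a::comm_ring_1 \<Rightarrow> 'a set" where
  "principal r = {r * c | c. True}"

definition R_submodule :: "'a::idom fract set \<Rightarrow> bool" where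
  "R_submodule M \<longleftrightarrow> 0 \<in> M \<and> (\<forall>x\<in>M. \<forall>y\<in>M. x + y \<in> M) \<and> (\<forall>a. \<forall>x\<in>M. emb a * x \<in> M)"

text \<open>A type J/R: an R-submodule J of Q with R contained in J.\<close>
definition is_type :: "'a::idom fract set \<Rightarrow> bool" where
  "is_type J \<longleftrightarrow> R_submodule J \<and> range emb \<subseteq> J"

definition R_span :: "'a::idom fract set \<Rightarrow> 'a fract set" where
  "R_span G = {(\<Sum>g\<in>F. emb (c g) * g) | F c. finite F \<and> F \<subseteq> G}"

definition countably_generated :: "'a::idom fract set \<Rightarrow> bool" where
  "countably_generated M \<longleftrightarrow> (\<exists>G. countable G \<and> G \<subseteq> M \<and> R_span G = M)"

definition inv_principal :: "'a::idom \<Rightarrow> 'a fract set" where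
  "inv_principal r = {inverse (emb r) * emb a | a. True}"

text \<open>A well-ordered type is (order-isomorphic to) omega_1 iff it is uncountable and
  all its proper initial segments are countable.\<close>
definition is_omega1 :: "'w::wellorder itself \<Rightarrow> bool" where
  "is_omega1 _ \<longleftrightarrow> uncountable (UNIV :: 'w set) \<and> (\<forall>x::'w. countable {y. y < x})"

text \<open>Limit ordinal (nonzero, not a successor).\<close>
definition is_limit :: "'w::wellorder \<Rightarrow> bool" where
  "is_limit \<delta> \<longleftrightarrow> (\<exists>y. y < \<delta>) \<and> (\<forall>y<\<delta>. \<exists>z. y < z \<and> z < \<delta>)"

definition closed_set :: "'w::wellorder set \<Rightarrow> bool" where
  "closed_set C \<longleftrightarrow>
     (\<forall>\<delta>. (\<exists>y. y < \<delta>) \<and> (\<forall>\<alpha><\<delta>. \<exists>\<beta>\<in>C. \<alpha> < \<beta> \<and> \<beta> < \<delta>) \<longrightarrow> \<delta> \<in> C)"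

definition unbounded_set :: "'w::wellorder set \<Rightarrow> bool" where
  "unbounded_set C \<longleftrightarrow> (\<forall>\<alpha>. \<exists>\<beta>\<in>C. \<alpha> \<le> \<beta>)"

definition cub :: "'w::wellorder set \<Rightarrow> bool" where
  "cub C \<longleftrightarrow> closed_set C \<and> unbounded_set C"

text \<open>S1 ~ S2 in D(omega_1).  The class of S is 0 iff S ~ {}, and 1 iff S ~ UNIV.\<close>
definition cub_equiv :: "'w::wellorder set \<Rightarrow> 'w set \<Rightarrow> bool" where
  "cub_equiv S1 S2 \<longleftrightarrow> (\<exists>C. cub C \<and> S1 \<inter> C = S2 \<inter> C)"

definition type_repr :: "'a::idom fract set \<Rightarrow> ('w::wellorder \<Rightarrow> 'a) \<Rightarrow> bool" where
  "type_repr J r \<longleftrightarrow>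
     (\<forall>\<sigma>. r \<sigma> \<noteq> 0) \<and>
     (\<forall>\<sigma> \<tau>. \<tau> < \<sigma> \<longrightarrow> r \<tau> dvd r \<sigma> \<and> \<not> r \<sigma> dvd r \<tau>) \<and>
     J = (\<Union>\<sigma>. inv_principal (r \<sigma>))"

definition quot_set :: "'a::comm_ring_1 set \<Rightarrow> 'a set \<Rightarrow> 'a set set" where
  "quot_set A I = (\<lambda>x. {y \<in> A. x - y \<in> I}) ` A"

definition essentially_uncountable :: "('w::wellorder \<Rightarrow> 'a::idom) \<Rightarrow> bool" where
  "essentially_uncountable r \<longleftrightarrow>
     (\<forall>\<sigma>. \<exists>\<tau>>\<sigma>. uncountable (quot_set (principal (r \<sigma>)) (principal (r \<tau>))))"

definition essentially_countable :: "('w::wellorder \<Rightarrow> 'a::idom) \<Rightarrow> bool" where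
  "essentially_countable r \<longleftrightarrow> \<not> essentially_uncountable r"

text \<open>Completeness of R/K (K = intersection of the ideals in B) in the metrizable linear
  topology with the (countably many) submodules I/K, I in B, as a basis of neighbourhoods
  of 0: every Cauchy sequence converges.  Sequences in R/K are lifted to R; since every
  I in B contains K this is the same notion.\<close>
definition lin_top_complete :: "'a::comm_ring_1 set set \<Rightarrow> bool" where
  "lin_top_complete B \<longleftrightarrow>
     (\<forall>x :: nat \<Rightarrow> 'a.
        (\<forall>I\<in>B. \<exists>N. \<forall>m\<ge>N. \<forall>n\<ge>N. x m - x n \<in> I) \<longrightarrow>
        (\<exists>y. \<forall>I\<in>B. \<exists>N. \<forall>n\<ge>N. x n - y \<in> I))"

definition Gamma_set :: "('w::wellorder \<Rightarrow> 'a::idom) \<Rightarrow> 'w set" where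
  "Gamma_set r = {\<delta>. is_limit \<delta> \<and> \<not> lin_top_complete {principal (r \<sigma>) | \<sigma>. \<sigma> < \<delta>}}"

definition T_seqs :: "('w::wellorder \<Rightarrow> 'a::idom) \<Rightarrow> 'w \<Rightarrow> ('w \<Rightarrow> 'a) set" where
  "T_seqs r \<delta> = {u. (\<forall>\<sigma><\<delta>. u \<sigma> dvd 1) \<and>
                     (\<forall>\<sigma> \<tau>. \<sigma> < \<tau> \<and> \<tau> < \<delta> \<longrightarrow> u \<tau> - u \<sigma> \<in> principal (r \<sigma>))}"

definition is_subring :: "'a::comm_ring_1 set \<Rightarrow> bool" where
  "is_subring A \<longleftrightarrow> 0 \<in> A \<and> 1 \<in> A \<and>
     (\<forall>x\<in>A. \<forall>y\<in>A. x + y \<in> A \<and> x - y \<in> A \<and> x * y \<in> A)"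

definition omega1_filtration :: "('w::wellorder \<Rightarrow> 'a::comm_ring_1 set) \<Rightarrow> bool" where
  "omega1_filtration N \<longleftrightarrow>
     (\<forall>\<alpha>. countable (N \<alpha>) \<and> is_subring (N \<alpha>)) \<and>
     (\<forall>\<alpha> \<beta>. \<alpha> \<le> \<beta> \<longrightarrow> N \<alpha> \<subseteq> N \<beta>) \<and>
     (\<Union>\<alpha>. N \<alpha>) = UNIV \<and>
     (\<forall>\<alpha>. is_limit \<alpha> \<longrightarrow> N \<alpha> = (\<Union>\<beta>\<in>{\<beta>. \<beta> < \<alpha>}. N \<beta>))"

definition Gamma'_set :: "('w::wellorder \<Rightarrow> 'a::idom) \<Rightarrow> ('w \<Rightarrow> 'a set) \<Rightarrow> 'w set" where
  "Gamma'_set r N = {\<delta>. is_limit \<delta> \<and>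
     (\<exists>u\<in>T_seqs r \<delta>. \<forall>f. f dvd 1 \<longrightarrow>
        (\<exists>\<sigma><\<delta>. \<not> (\<exists>n\<in>N \<delta>. u \<sigma> * f - n \<in> principal (r \<sigma>))))}"

end

theory Submission
  imports Defs
begin

lemma uncountable_bool_seq: "uncountable (UNIV :: (nat \<Rightarrow> bool) set)"
proof
  assume "countable (UNIV :: (nat \<Rightarrow> bool) set)"
  then obtain f :: "nat \<Rightarrow> (nat \<Rightarrow> bool)" where f: "range f = UNIV"
    using uncountable_def by blast
  then obtain n where "f n = (\<lambda>m. \<not> f m m)" by (metis UNIV_I imageE)
  then show False by (metis (full_types))
qed

lemma principal_iff: "x \<in> principal r \<longleftrightarrow> r dvd x"
  unfolding principal_def dvd_def by (auto simp: mult.commute)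

lemma omega1_bound:
  assumes om: "is_omega1 TYPE('w::wellorder)" and A: "countable (A::'w set)"
  shows "\<exists>b. \<forall>a\<in>A. a < b"
proof -
  have "countable (\<Union>a\<in>A. {y. y \<le> a})"
  proof (rule countable_UN[OF A])
    fix a assume "a \<in> A"
    have "{y. y \<le> a} = insert a {y. y < a}" by auto
    then show "countable {y. y \<le> a}" using om unfolding is_omega1_def by simp
  qed
  moreover have "uncountable (UNIV :: 'w set)" using om unfolding is_omega1_def by simp
  ultimately have "(\<Union>a\<in>A. {y. y \<le> a}) \<noteq> UNIV" by metis
  then obtain b where "b \<notin> (\<Union>a\<in>A. {y. y \<le> a})" by blast
  then show ?thesis by (auto simp: not_le)
qed

lemma omega1_cub:
  assumes om: "is_omega1 TYPE('w::wellorder)"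
  shows "cub {\<delta>::'w. \<sigma>0 < \<delta> \<and> (\<forall>\<alpha><\<delta>. g \<alpha> < \<delta>)}" (is "cub ?C")
  unfolding cub_def
proof
  show "closed_set ?C"
    unfolding closed_set_def
  proof (intro allI impI)
    fix \<delta> :: 'w
    assume h: "(\<exists>y. y < \<delta>) \<and> (\<forall>\<alpha><\<delta>. \<exists>\<beta>\<in>?C. \<alpha> < \<beta> \<and> \<beta> < \<delta>)"
    then obtain y where "y < \<delta>" by blast
    then obtain \<beta> where "\<beta> \<in> ?C" "\<beta> < \<delta>" using h by blast
    then have "\<sigma>0 < \<delta>" by auto
    moreover have "\<forall>\<alpha><\<delta>. g \<alpha> < \<delta>"
    proof (intro allI impI)
      fix \<alpha> assume "\<alpha> < \<delta>"
      then obtain \<beta> where "\<beta> \<in> ?C" "\<alpha> < \<beta>" "\<beta> < \<delta>" using h by blast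
      then show "g \<alpha> < \<delta>" by auto
    qed
    ultimately show "\<delta> \<in> ?C" by simp
  qed
next
  show "unbounded_set ?C"
    unfolding unbounded_set_def
  proof
    fix \<alpha> :: 'w
    have ex0: "\<exists>b. \<alpha> < b \<and> \<sigma>0 < b"
      using omega1_bound[OF om, of "{\<alpha>, \<sigma>0}"] by auto
    have exS: "\<exists>b. a < b \<and> (\<forall>x\<le>a. g x < b)" for a :: 'w
    proof -
      have "countable (insert a (g ` {x. x \<le> a}))"
      proof -
        have "{x. x \<le> a} = insert a {y. y < a}" by auto
        then have "countable {x. x \<le> a}" using om unfolding is_omega1_def by simp
        then show ?thesis by simp
      qed
      from omega1_bound[OF om this] show ?thesis by auto
    qed
    define a :: "nat \<Rightarrow> 'w" where
      "a = rec_nat (SOME b. \<alpha> < b \<and> \<sigma>0 < b) (\<lambda>n p. SOME b. p < b \<and> (\<forall>x\<le>p. g x < b))"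
    have a0: "\<alpha> < a 0 \<and> \<sigma>0 < a 0" unfolding a_def using someI_ex[OF ex0] by simp
    have aS: "a n < a (Suc n) \<and> (\<forall>x\<le>a n. g x < a (Suc n))" for n
      unfolding a_def using someI_ex[OF exS] by simp
    obtain b0 where b0: "\<forall>n. a n < b0" using omega1_bound[OF om, of "range a"] by auto
    define \<delta> where "\<delta> = (LEAST z. \<forall>n. a n \<le> z)"
    have d1: "\<forall>n. a n \<le> \<delta>" unfolding \<delta>_def
      by (rule LeastI[of _ b0]) (use b0 less_imp_le in auto)
    have d2: "\<exists>n. \<beta> < a n" if "\<beta> < \<delta>" for \<beta>
    proof (rule ccontr)
      assume "\<not> ?thesis"
      then have "\<forall>n. a n \<le> \<beta>" by (auto simp: not_less)
      then have "\<delta> \<le> \<beta>" unfolding \<delta>_def by (rule Least_le)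
      with that show False by simp
    qed
    have "\<delta> \<in> ?C"
    proof -
      have "\<sigma>0 < \<delta>" using a0 d1 by (metis less_le_trans)
      moreover have "g \<beta> < \<delta>" if "\<beta> < \<delta>" for \<beta>
      proof -
        note bd = that
        obtain n where "\<beta> < a n" using d2 bd by blast
        then have "g \<beta> < a (Suc n)" using aS by auto
        then show ?thesis using d1 by (metis less_le_trans)
      qed
      ultimately show ?thesis by simp
    qed
    moreover have "\<alpha> \<le> \<delta>" using a0 d1 by (metis less_le_trans less_imp_le)
    ultimately show "\<exists>\<beta>\<in>?C. \<alpha> \<le> \<beta>" by blast
  qed
qed

lemma cofinal_seq:
  assumes om: "is_omega1 TYPE('w::wellorder)" and lim: "is_limit (\<delta>::'w)" and s0: "\<sigma>0 < \<delta>"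
  shows "\<exists>s::nat \<Rightarrow> 'w. s 0 = \<sigma>0 \<and> (\<forall>n. s n < s (Suc n) \<and> s n < \<delta>) \<and> (\<forall>\<beta><\<delta>. \<exists>n. \<beta> < s n)"
proof -
  have cd: "countable {y. y < \<delta>}" using om unfolding is_omega1_def by simp
  have ne: "{y. y < \<delta>} \<noteq> {}" using s0 by auto
  define e where "e = from_nat_into {y. y < \<delta>}"
  have er: "range e = {y. y < \<delta>}" unfolding e_def using range_from_nat_into[OF ne cd] .
  have ex: "\<exists>z. p < z \<and> e n < z \<and> z < \<delta>" if "p < \<delta>" for p n
  proof -
    have "max p (e n) < \<delta>" using that er by auto
    then obtain z where "max p (e n) < z" "z < \<delta>" using lim unfolding is_limit_def by blast
    then show ?thesis by auto
  qed
  define s where "s = rec_nat \<sigma>0 (\<lambda>n p. SOME z. p < z \<and> e n < z \<and> z < \<delta>)"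
  have sz: "s 0 = \<sigma>0" unfolding s_def by simp
  have sS: "s (Suc n) = (SOME z. s n < z \<and> e n < z \<and> z < \<delta>)" for n unfolding s_def by simp
  have sl: "s n < \<delta>" for n
  proof (induction n)
    case 0 then show ?case using sz s0 by simp
  next
    case (Suc n) then show ?case using someI_ex[OF ex[OF Suc]] sS by simp
  qed
  have sP: "s n < s (Suc n) \<and> e n < s (Suc n)" for n using someI_ex[OF ex[OF sl[of n]]] sS by simp
  have "\<forall>\<beta><\<delta>. \<exists>n. \<beta> < s n"
  proof (intro allI impI)
    fix \<beta> assume "\<beta> < \<delta>"
    then obtain n where "\<beta> = e n" using er by (metis mem_Collect_eq rangeE)
    then show "\<exists>n. \<beta> < s n" using sP by blast
  qed
  then show ?thesis using sz sl sP by blast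
qed

lemma gamma_part:
  fixes r :: "'w::wellorder \<Rightarrow> 'a::idom"
  assumes om: "is_omega1 TYPE('w)"
    and rd: "\<forall>\<sigma> \<tau>. \<tau> < \<sigma> \<longrightarrow> r \<tau> dvd r \<sigma> \<and> \<not> r \<sigma> dvd r \<tau>"
    and ctbl: "countable (quot_set (principal (r \<sigma>0)) (principal (r \<delta>)))"
    and lim: "is_limit \<delta>" and s0: "\<sigma>0 < \<delta>"
  shows "\<not> lin_top_complete {principal (r \<sigma>) | \<sigma>. \<sigma> < \<delta>}"
proof
  assume comp: "lin_top_complete {principal (r \<sigma>) | \<sigma>. \<sigma> < \<delta>}"
  obtain s where sz: "s 0 = \<sigma>0" and ss: "\<And>n. s n < s (Suc n)" and sl: "\<And>n. s n < \<delta>"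
    and scof: "\<And>\<beta>. \<beta> < \<delta> \<Longrightarrow> \<exists>n. \<beta> < s n"
    using cofinal_seq[OF om lim s0] by blast
  define d where "d n = r (s n)" for n
  have rle: "r \<tau> dvd r \<sigma>" if "\<tau> \<le> \<sigma>" for \<tau> \<sigma>
    using rd that by (cases "\<tau> = \<sigma>") auto
  have smono: "s n \<le> s m" if "n \<le> m" for n m
    using lift_Suc_mono_le[of s, OF _ that] ss less_imp_le by blast
  have dmono: "d n dvd d m" if "n \<le> m" for n m
    unfolding d_def using rle smono that by blast
  have dstrict: "\<not> d (Suc n) dvd d n" for n unfolding d_def using rd ss by blast
  define x where "x b k = (\<Sum>n<k. if b n then d n else 0)" for b :: "nat \<Rightarrow> bool" and k
  have xdiff: "d N dvd x b k - x b N" if "N \<le> k" for b N k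
  proof -
    have "x b k - x b N = (\<Sum>n\<in>{N..<k}. if b n then d n else 0)"
      unfolding x_def using that
      by (metis (no_types, lifting) add_diff_cancel_left' lessThan_atLeast0 sum.atLeastLessThan_concat zero_le)
    also have "d N dvd \<dots>"
      by (rule dvd_sum) (auto intro: dmono)
    finally show ?thesis .
  qed
  have x0: "d 0 dvd x b k" for b k
    unfolding x_def by (rule dvd_sum) (auto intro: dmono)
  have exI: "\<exists>y. \<forall>I\<in>{principal (r \<sigma>) | \<sigma>. \<sigma> < \<delta>}. \<exists>N. \<forall>n\<ge>N. x b n - y \<in> I" for b
  proof -
    have "\<forall>I\<in>{principal (r \<sigma>) | \<sigma>. \<sigma> < \<delta>}. \<exists>N. \<forall>m\<ge>N. \<forall>n\<ge>N. x b m - x b n \<in> I"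
    proof
      fix I assume "I \<in> {principal (r \<sigma>) | \<sigma>. \<sigma> < \<delta>}"
      then obtain \<sigma> where I: "I = principal (r \<sigma>)" and "\<sigma> < \<delta>" by blast
      then obtain N where "\<sigma> < s N" using scof by blast
      then have rs: "r \<sigma> dvd d N" unfolding d_def using rd by blast
      have "x b m - x b n \<in> I" if "m \<ge> N" "n \<ge> N" for m n
      proof -
        have e: "x b m - x b n = (x b m - x b N) - (x b n - x b N)" by simp
        have "d N dvd (x b m - x b N) - (x b n - x b N)"
          using xdiff[OF that(1)] xdiff[OF that(2)] by (rule dvd_diff)
        then have "d N dvd x b m - x b n" by (subst e)
        then have "r \<sigma> dvd x b m - x b n" by (rule dvd_trans[OF rs])
        then show ?thesis unfolding I principal_iff .
      qed
      then show "\<exists>N. \<forall>m\<ge>N. \<forall>n\<ge>N. x b m - x b n \<in> I" by blast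
    qed
    then show ?thesis using comp unfolding lin_top_complete_def by blast
  qed
  have exy: "\<exists>y. \<forall>\<sigma><\<delta>. \<exists>N. \<forall>n\<ge>N. r \<sigma> dvd x b n - y" for b
  proof -
    obtain y0 where y0: "\<forall>I\<in>{principal (r \<sigma>) | \<sigma>. \<sigma> < \<delta>}. \<exists>N. \<forall>n\<ge>N. x b n - y0 \<in> I"
      using exI[of b] by blast
    have "\<forall>\<sigma><\<delta>. \<exists>N. \<forall>n\<ge>N. r \<sigma> dvd x b n - y0"
    proof (intro allI impI)
      fix \<sigma> assume "\<sigma> < \<delta>"
      then have mem: "principal (r \<sigma>) \<in> {principal (r \<sigma>) | \<sigma>. \<sigma> < \<delta>}" by blast
      obtain N where "\<forall>n\<ge>N. x b n - y0 \<in> principal (r \<sigma>)" using bspec[OF y0 mem] by blast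
      then show "\<exists>N. \<forall>n\<ge>N. r \<sigma> dvd x b n - y0" unfolding principal_iff by blast
    qed
    then show ?thesis by blast
  qed
  define y where "y b = (SOME y. \<forall>\<sigma><\<delta>. \<exists>N. \<forall>n\<ge>N. r \<sigma> dvd x b n - y)" for b
  have y: "\<exists>N. \<forall>n\<ge>N. r \<sigma> dvd x b n - y b" if "\<sigma> < \<delta>" for b \<sigma>
    using someI_ex[OF exy[of b]] that unfolding y_def by blast
  have yP: "y b \<in> principal (r \<sigma>0)" for b
  proof -
    obtain N where "\<forall>n\<ge>N. r \<sigma>0 dvd x b n - y b" using y[OF s0] by blast
    then have "r \<sigma>0 dvd x b N - y b" by blast
    then have "d 0 dvd x b N - y b" unfolding d_def sz .
    then have "d 0 dvd x b N - (x b N - y b)" using x0 by (rule dvd_diff[rotated])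
    then show ?thesis unfolding principal_iff d_def sz by simp
  qed
  define P where "P = principal (r \<sigma>0)"
  define \<phi> where "\<phi> b = {z \<in> P. y b - z \<in> principal (r \<delta>)}" for b
  have inj: "inj \<phi>"
  proof (rule injI)
    fix b b' assume eq: "\<phi> b = \<phi> b'"
    show "b = b'"
    proof (rule ccontr)
      assume ne: "b \<noteq> b'"
      have "y b \<in> \<phi> b" unfolding \<phi>_def P_def using yP by (simp add: principal_iff)
      then have "y b' - y b \<in> principal (r \<delta>)" using eq unfolding \<phi>_def by simp
      then have ydv: "r \<delta> dvd y b - y b'" unfolding principal_iff by (metis dvd_minus_iff minus_diff_eq)
      obtain j where bj: "b j \<noteq> b' j" and jmin: "\<And>i. i < j \<Longrightarrow> b i = b' i"
      proof -
        have "\<exists>j. b j \<noteq> b' j" using ne by auto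
        then have "b (LEAST j. b j \<noteq> b' j) \<noteq> b' (LEAST j. b j \<noteq> b' j)" by (rule LeastI_ex)
        moreover have "\<And>i. i < (LEAST j. b j \<noteq> b' j) \<Longrightarrow> b i = b' i"
          using not_less_Least by blast
        ultimately show ?thesis by (rule that)
      qed
      have xj: "x b (Suc j) - x b' (Suc j) = (if b j then d j else 0) - (if b' j then d j else 0)"
      proof -
        have "(\<Sum>n<j. if b n then d n else 0) = (\<Sum>n<j. if b' n then d n else 0)"
          using jmin by (intro sum.cong) auto
        then show ?thesis unfolding x_def by simp
      qed
      have dj: "d (Suc j) dvd d j"
      proof -
        obtain N1 where N1: "\<forall>n\<ge>N1. d (Suc j) dvd x b n - y b"
          using y[OF sl[of "Suc j"]] unfolding d_def by blast
        obtain N2 where N2: "\<forall>n\<ge>N2. d (Suc j) dvd x b' n - y b'"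
          using y[OF sl[of "Suc j"]] unfolding d_def by blast
        define k where "k = max (Suc j) (max N1 N2)"
        have a1: "d (Suc j) dvd x b k - y b" using N1 k_def by simp
        have a2: "d (Suc j) dvd x b' k - y b'" using N2 k_def by simp
        have a3: "d (Suc j) dvd x b k - x b (Suc j)" using xdiff k_def by simp
        have a4: "d (Suc j) dvd x b' k - x b' (Suc j)" using xdiff k_def by simp
        have a5: "d (Suc j) dvd y b - y b'"
          using ydv rle[of "s (Suc j)" \<delta>] sl[of "Suc j"] unfolding d_def
          by (meson dvd_trans less_imp_le)
        have e: "x b (Suc j) - x b' (Suc j) =
              (x b' k - x b' (Suc j)) - (x b k - x b (Suc j)) + (x b k - y b) - (x b' k - y b') + (y b - y b')"
          by (simp add: algebra_simps)
        then have "d (Suc j) dvd x b (Suc j) - x b' (Suc j)"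
          unfolding e by (intro dvd_add dvd_diff a1 a2 a3 a4 a5)
        then show ?thesis unfolding xj using bj
          by (cases "b j") (auto simp: dvd_minus_iff)
      qed
      then show False using dstrict by blast
    qed
  qed
  have "\<phi> b \<in> quot_set P (principal (r \<delta>))" for b
    unfolding quot_set_def \<phi>_def
    by (rule image_eqI[where x="y b"]) (simp_all add: yP P_def)
  then have "\<phi> ` UNIV \<subseteq> quot_set P (principal (r \<delta>))" by (rule image_subsetI)
  then have "countable (\<phi> ` UNIV)" using ctbl unfolding P_def by (rule countable_subset)
  then have "countable (UNIV :: (nat \<Rightarrow> bool) set)"
    using inj by (rule countable_image_inj_on)
  with uncountable_bool_seq show False by (rule notE)
qed


theorem mainTheorem5:
  fixes J :: "'a::idom fract set"
    and r :: "'w::wellorder \<Rightarrow> 'a"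
    and N :: "'w \<Rightarrow> 'a set"
  assumes omega1: "is_omega1 TYPE('w)"
    and val: "valuation_domain TYPE('a)"
    and card_aleph1: "\<exists>h. bij_betw h (UNIV :: 'a set) (UNIV :: 'w set)"
    and J_type: "is_type J"
    and not_cg: "\<not> countably_generated J"
    and repr: "type_repr J r"
    and filt: "omega1_filtration N"
    and ess_ctbl: "essentially_countable r"
  shows "cub_equiv (Gamma'_set r N) {} \<and> cub_equiv (Gamma_set r) UNIV"
proof
  obtain \<sigma>0 where ct: "\<And>\<tau>. \<sigma>0 < \<tau> \<Longrightarrow> countable (quot_set (principal (r \<sigma>0)) (principal (r \<tau>)))"
  proof -
    have "\<not> (\<forall>\<sigma>. \<exists>\<tau>>\<sigma>. uncountable (quot_set (principal (r \<sigma>)) (principal (r \<tau>))))"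
      using ess_ctbl unfolding essentially_countable_def essentially_uncountable_def .
    then obtain \<sigma> where "\<not> (\<exists>\<tau>>\<sigma>. uncountable (quot_set (principal (r \<sigma>)) (principal (r \<tau>))))"
      by (simp only: not_all) (elim exE, rule that)
    note nx = this
    show ?thesis
    proof (rule that[of \<sigma>])
      fix \<tau> assume "\<sigma> < \<tau>"
      then show "countable (quot_set (principal (r \<sigma>)) (principal (r \<tau>)))" using nx by blast
    qed
  qed
  have rd: "\<forall>\<sigma> \<tau>. \<tau> < \<sigma> \<longrightarrow> r \<tau> dvd r \<sigma> \<and> \<not> r \<sigma> dvd r \<tau>"
    using conjunct1[OF conjunct2[OF repr[unfolded type_repr_def]]] .
  have Nmono: "\<And>\<alpha> \<beta>. \<alpha> \<le> \<beta> \<Longrightarrow> N \<alpha> \<subseteq> N \<beta>"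
    and Nsub: "\<And>\<alpha>. is_subring (N \<alpha>)" and Nun: "(\<Union>\<alpha>. N \<alpha>) = UNIV"
    using filt unfolding omega1_filtration_def by simp_all
  show "cub_equiv (Gamma'_set r N) {}"
  proof -
    define P where "P = principal (r \<sigma>0)"
    define Reps where "Reps \<sigma> = (\<lambda>c. SOME y. y \<in> c) ` quot_set P (principal (r \<sigma>))" for \<sigma>
    have exg: "\<exists>b. \<sigma>0 < \<sigma> \<longrightarrow> Reps \<sigma> \<subseteq> N b" for \<sigma>
    proof (cases "\<sigma>0 < \<sigma>")
      case True
      have cR: "countable (Reps \<sigma>)" unfolding Reps_def P_def by (rule countable_image[OF ct[OF True]])
      define h where "h y = (SOME \<beta>. y \<in> N \<beta>)" for y
      have hy: "y \<in> N (h y)" for y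
      proof -
        have "\<exists>\<beta>. y \<in> N \<beta>" using Nun by blast
        then show ?thesis unfolding h_def by (rule someI_ex)
      qed
      obtain b where b: "\<forall>a\<in>h ` Reps \<sigma>. a < b" using omega1_bound[OF omega1 countable_image[OF cR, of h]] by blast
      have "Reps \<sigma> \<subseteq> N b"
      proof
        fix y assume "y \<in> Reps \<sigma>"
        then have "h y \<le> b" using b by (simp add: less_imp_le)
        then show "y \<in> N b" using hy Nmono by blast
      qed
      then show ?thesis by blast
    qed simp
    define g where "g \<sigma> = (SOME b. \<sigma>0 < \<sigma> \<longrightarrow> Reps \<sigma> \<subseteq> N b)" for \<sigma>
    have gP: "Reps \<sigma> \<subseteq> N (g \<sigma>)" if "\<sigma>0 < \<sigma>" for \<sigma>
      using someI_ex[OF exg[of \<sigma>]] that unfolding g_def by blast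
    define C where "C = {\<delta>. \<sigma>0 < \<delta> \<and> (\<forall>\<alpha><\<delta>. g \<alpha> < \<delta>)}"
    have cubC: "cub C" unfolding C_def by (rule omega1_cub[OF omega1])
    have "\<delta> \<notin> Gamma'_set r N" if dC: "\<delta> \<in> C" for \<delta>
    proof
      assume "\<delta> \<in> Gamma'_set r N"
      then obtain u where uT: "u \<in> T_seqs r \<delta>" and
        bad: "\<And>f. f dvd 1 \<Longrightarrow> \<exists>\<sigma><\<delta>. \<not> (\<exists>n\<in>N \<delta>. u \<sigma> * f - n \<in> principal (r \<sigma>))"
        unfolding Gamma'_set_def by blast
      have s0: "\<sigma>0 < \<delta>" and gl: "\<And>\<alpha>. \<alpha> < \<delta> \<Longrightarrow> g \<alpha> < \<delta>" using dC unfolding C_def by auto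
      have uu: "u \<sigma>0 dvd 1" using uT s0 unfolding T_seqs_def by blast
      have uc: "\<And>\<sigma> \<tau>. \<sigma> < \<tau> \<Longrightarrow> \<tau> < \<delta> \<Longrightarrow> r \<sigma> dvd u \<tau> - u \<sigma>"
        using uT unfolding T_seqs_def principal_iff by blast
      obtain f where f: "1 = u \<sigma>0 * f" using uu unfolding dvd_def by blast
      have fu: "f dvd 1" using f by (metis dvd_triv_right)
      have one: "1 \<in> N \<delta>" and addN: "\<And>a b. a \<in> N \<delta> \<Longrightarrow> b \<in> N \<delta> \<Longrightarrow> a + b \<in> N \<delta>"
        using Nsub[of \<delta>] unfolding is_subring_def by blast+
      have X: "u \<sigma> * f - 1 = (u \<sigma> - u \<sigma>0) * f" for \<sigma>
        using f by (simp add: algebra_simps)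
      have "\<exists>n\<in>N \<delta>. u \<sigma> * f - n \<in> principal (r \<sigma>)" if sd: "\<sigma> < \<delta>" for \<sigma>
      proof (cases "\<sigma>0 < \<sigma>")
        case False
        have "r \<sigma> dvd u \<sigma> - u \<sigma>0"
        proof (cases "\<sigma> = \<sigma>0")
          case False
          then have "\<sigma> < \<sigma>0" using \<open>\<not> \<sigma>0 < \<sigma>\<close> by simp
          then have "r \<sigma> dvd u \<sigma>0 - u \<sigma>" using uc s0 by blast
          then show ?thesis by (metis dvd_minus_iff minus_diff_eq)
        qed simp
        then have "r \<sigma> dvd u \<sigma> * f - 1" unfolding X by simp
        then show ?thesis using one unfolding principal_iff by blast
      next
        case True
        define x where "x = u \<sigma> * f - 1"
        have xP: "x \<in> P" unfolding P_def principal_iff x_def X using uc[OF True sd] by simp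
        define c where "c = {z \<in> P. x - z \<in> principal (r \<sigma>)}"
        have cq: "c \<in> quot_set P (principal (r \<sigma>))" unfolding c_def quot_set_def using xP by blast
        have "x \<in> c" unfolding c_def using xP by (simp add: principal_iff)
        then have yc: "(SOME y. y \<in> c) \<in> c" by (rule someI)
        have "(SOME y. y \<in> c) \<in> Reps \<sigma>" unfolding Reps_def using cq by blast
        then have "(SOME y. y \<in> c) \<in> N (g \<sigma>)" using gP[OF True] by blast
        moreover have "N (g \<sigma>) \<subseteq> N \<delta>" using gl[OF sd] Nmono less_imp_le by blast
        ultimately have yN: "(SOME y. y \<in> c) \<in> N \<delta>" by blast
        have "u \<sigma> * f - (1 + (SOME y. y \<in> c)) = x - (SOME y. y \<in> c)" unfolding x_def by simp
        moreover have "x - (SOME y. y \<in> c) \<in> principal (r \<sigma>)" using yc unfolding c_def by blast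
        ultimately show ?thesis using addN[OF one yN] by metis
      qed
      then show False using bad[OF fu] by blast
    qed
    then have "Gamma'_set r N \<inter> C = {} \<inter> C" by blast
    then show ?thesis unfolding cub_equiv_def using cubC by blast
  qed
  show "cub_equiv (Gamma_set r) UNIV"
  proof -
    define sc where "sc \<alpha> = (SOME z. \<alpha> < z)" for \<alpha> :: 'w
    have scP: "\<alpha> < sc \<alpha>" for \<alpha>
    proof -
      have "\<exists>z. \<alpha> < z" using omega1_bound[OF omega1, of "{\<alpha>}"] by auto
      then show ?thesis unfolding sc_def by (rule someI_ex)
    qed
    define C where "C = {\<delta>. \<sigma>0 < \<delta> \<and> (\<forall>\<alpha><\<delta>. sc \<alpha> < \<delta>)}"
    have cubC: "cub C" unfolding C_def by (rule omega1_cub[OF omega1])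
    have "\<delta> \<in> Gamma_set r" if dC: "\<delta> \<in> C" for \<delta>
    proof -
      have s0: "\<sigma>0 < \<delta>" and sl: "\<And>\<alpha>. \<alpha> < \<delta> \<Longrightarrow> sc \<alpha> < \<delta>" using dC unfolding C_def by auto
      have lim: "is_limit \<delta>" unfolding is_limit_def using s0 sl scP by blast
      show ?thesis unfolding Gamma_set_def using gamma_part[OF omega1 rd ct[OF s0] lim s0] lim by blast
    qed
    then have "Gamma_set r \<inter> C = UNIV \<inter> C" by blast
    then show ?thesis unfolding cub_equiv_def using cubC by blast
  qed
qed

end
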